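(* Let $G=(V,E)$ be a simple graph on $V=\{1,\dots,n\}$ with graph state $|G\rangle$, and let $$\Omega_g=\sum_{\mathbf b\in\{0,1\}^n}\bigotimes_{j=1}^n|\Phi_{c_j(\mathbf b)\,\mathbf b_j}\rangle\langle\Phi_{c_j(\mathbf b)\,\mathbf b_j}|_{O_jO_j'}$$ acting on $\mathcal H\otimes\mathcal H$, where the first copy consists of qubits $O_1,\dots,O_n$ and the second of $O_1',\dots,O_n'$. Then: (i) $\Omega_g$ is an orthogonal projector and $\mathbb F\Omega_g\mathbb F=\Omega_g$; (ii) for every $n$-qubit state $|\omega\rangle$, $\Omega_g(|G\rangle\otimes|\omega\rangle)=\langle G|\omega\rangle\,|G\rangle\otimes|G\rangle$ and $\Omega_g(|\omega\rangle\otimes|G\rangle)=\langle G|\omega\rangle\,|G\rangle\otimes|G\rangle$; in particular $\Omega_g(|G\rangle\otimes|G\rangle)=|G\rangle\otimes|G\rangle$; (iii) $\Omega_g$ is a symmetric two-copy strategy for $|G\rangle$ with $\Omega_g\mathbb P_\psi=0$ and $\Omega_g\mathbb P_s\mathbb P_\psi=0$ (where $|\psi\rangle=|G\rangle$), hence $\lambda_\star(\Omega_g)=\gamma_\star(\Omega_g)=\xi_\star(\Omega_g)=0$.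
   Context: $\mathcal H=(\mathbb C^2)^{\otimes n}$. The graph state is $|G\rangle=\prod_{\{u,v\}\in E}CZ_{uv}|+\rangle^{\otimes n}$. For $\mathbf b\in\{0,1\}^n$ (a "graph code"), the parity code $c(\mathbf b)\in\{0,1\}^n$ is $c_u(\mathbf b)=\sum_{v:\{u,v\}\in E}\mathbf b_v \bmod 2$. For $z,x\in\{0,1\}$, $|\Phi_{zx}\rangle=(\mathbb I\otimes X^xZ^z)(|00\rangle+|11\rangle)/\sqrt2$. On $\mathcal H\otimes\mathcal H$ (two copies) let $\mathbb F$ be the swap operator $\mathbb F(|x\rangle\otimes|y\rangle)=|y\rangle\otimes|x\rangle$, $\mathbb I$ the identity, $\mathbb P_s=(\mathbb F+\mathbb I)/2$ and $\mathbb P_\psi=|\psi\rangle\langle\psi|\otimes(\mathbb I-|\psi\rangle\langle\psi|)$. A symmetric two-copy strategy for $|\psi\rangle$ is an operator $\Omega$ on $\mathcal H\otimes\mathcal H$ with $0\le\Omega\le\mathbb I$, $\Omega(|\psi\rangle\otimes|\psi\rangle)=|\psi\rangle\otimes|\psi\rangle$ and $\mathbb F\Omega\mathbb F=\Omega$. Define $\lambda_\star(\Omega)$ as the largest eigenvalue of the Hermitian operator $2\mathbb P_\psi\mathbb P_s\Omega\mathbb P_s\mathbb P_\psi$, $\gamma_\star(\Omega)$ as the largest eigenvalue of $\mathbb P_\psi\mathbb F\Omega\mathbb P_\psi$, and $\xi_\star(\Omega)$ as the largest eigenvalue of $\mathbb P_\psi(\tfrac12\mathbb F+\mathbb I)\Omega\mathbb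 P_\psi$. *)

theory Defs
  imports "Jordan_Normal_Form.Schur_Decomposition" "Jordan_Normal_Form.Char_Poly"
begin

text \<open>The n-qubit space (C^2)^(tensor n) is C^(2^n). A computational basis index
  x < 2^n encodes the bit string with qubit j (j = 1..n) given by bit (j-1) of x.
  The two-copy space H (x) H is C^(2^n * 2^n) with the standard Kronecker
  ordering: the basis vector |x> (x) |y> has index x * 2^n + y.\<close>

definition qbit :: "nat \<Rightarrow> nat \<Rightarrow> nat" where
  "qbit j x = (x div 2 ^ (j - 1)) mod 2"

definition braket :: "complex vec \<Rightarrow> complex vec \<Rightarrow> complex" where
  "braket u v = (\<Sum>i<dim_vec u. cnj (u $ i) * v $ i)"

definition tensor_vec :: "complex vec \<Rightarrow> complex vec \<Rightarrow> complex vec" where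
  "tensor_vec u v = vec (dim_vec u * dim_vec v)
     (\<lambda>i. u $ (i div dim_vec v) * v $ (i mod dim_vec v))"

definition tensor_mat :: "complex mat \<Rightarrow> complex mat \<Rightarrow> complex mat" where
  "tensor_mat A B = mat (dim_row A * dim_row B) (dim_col A * dim_col B)
     (\<lambda>(i, j). A $$ (i div dim_row B, j div dim_col B) * B $$ (i mod dim_row B, j mod dim_col B))"

definition ket_bra :: "complex vec \<Rightarrow> complex mat" where
  "ket_bra v = mat (dim_vec v) (dim_vec v) (\<lambda>(i, j). v $ i * cnj (v $ j))"

definition simple_graph :: "nat \<Rightarrow> nat set set \<Rightarrow> bool" where
  "simple_graph n E \<longleftrightarrow> E \<subseteq> {{u, v} | u v. u \<in> {1..n} \<and> v \<in> {1..n} \<and> u \<noteq> v}"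

text \<open>Graph state: prod over edges of CZ_uv applied to |+>^n. Each CZ_uv is diagonal
  with entry -1 on basis states with x_u = x_v = 1; |+>^n has all amplitudes 2^(-n/2).\<close>
definition cz_phase :: "nat set \<Rightarrow> nat \<Rightarrow> complex" where
  "cz_phase e x = (if (\<forall>u\<in>e. qbit u x = 1) then -1 else 1)"

definition graph_state :: "nat \<Rightarrow> nat set set \<Rightarrow> complex vec" where
  "graph_state n E = vec (2 ^ n)
     (\<lambda>x. (\<Prod>e\<in>E. cz_phase e x) * complex_of_real (1 / sqrt (2 ^ n)))"

definition parity_code :: "nat set set \<Rightarrow> (nat \<Rightarrow> nat) \<Rightarrow> nat \<Rightarrow> nat" where
  "parity_code E b u = (\<Sum>v\<in>{v. {u, v} \<in> E}. b v) mod 2"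

definition graph_codes :: "nat \<Rightarrow> (nat \<Rightarrow> nat) set" where
  "graph_codes n = {1..n} \<rightarrow>\<^sub>E {0, 1}"

text \<open>Amplitude <a a'| Phi_zx> of |Phi_zx> = (I (x) X^x Z^z)(|00> + |11>)/sqrt 2.
  Since Z^z|a> = (-1)^(z a)|a> and X^x|a> = |a xor x>, this is
  (-1)^(z a)/sqrt 2 if a' = a xor x and 0 otherwise.\<close>
definition bell_amp :: "nat \<Rightarrow> nat \<Rightarrow> nat \<Rightarrow> nat \<Rightarrow> complex" where
  "bell_amp z x a a' =
     (if a' = (a + x) mod 2 then (-1) ^ (z * a) * complex_of_real (1 / sqrt 2) else 0)"

text \<open>Omega_g = sum_b tensor_j |Phi_{c_j(b) b_j}><Phi_{c_j(b) b_j}| on qubit pairs O_j O_j'.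
  Matrix entry at row |x>|y>, column |x'>|y'>.\<close>
definition Omega_g :: "nat \<Rightarrow> nat set set \<Rightarrow> complex mat" where
  "Omega_g n E = mat (2 ^ n * 2 ^ n) (2 ^ n * 2 ^ n) (\<lambda>(r, c).
     (\<Sum>b\<in>graph_codes n. \<Prod>j\<in>{1..n}.
        bell_amp (parity_code E b j) (b j) (qbit j (r div 2 ^ n)) (qbit j (r mod 2 ^ n))
        * cnj (bell_amp (parity_code E b j) (b j) (qbit j (c div 2 ^ n)) (qbit j (c mod 2 ^ n)))))"

definition swap_op :: "nat \<Rightarrow> complex mat" where
  "swap_op d = mat (d * d) (d * d) (\<lambda>(r, c).
     if r div d = c mod d \<and> r mod d = c div d then 1 else 0)"

definition P_sym :: "nat \<Rightarrow> complex mat" where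
  "P_sym d = (1 / 2 :: complex) \<cdot>\<^sub>m (swap_op d + 1\<^sub>m (d * d))"

definition P_psi :: "complex vec \<Rightarrow> complex mat" where
  "P_psi psi = tensor_mat (ket_bra psi) (1\<^sub>m (dim_vec psi) - ket_bra psi)"

definition psd :: "nat \<Rightarrow> complex mat \<Rightarrow> bool" where
  "psd m A \<longleftrightarrow> A \<in> carrier_mat m m \<and>
     (\<forall>w \<in> carrier_vec m. Im (braket w (A *\<^sub>v w)) = 0 \<and> 0 \<le> Re (braket w (A *\<^sub>v w)))"

definition sym_two_copy_strategy :: "complex vec \<Rightarrow> complex mat \<Rightarrow> bool" where
  "sym_two_copy_strategy psi Om \<longleftrightarrow>
     (let d = dim_vec psi in
      psd (d * d) Om \<and> psd (d * d) (1\<^sub>m (d * d) - Om) \<and>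
      Om *\<^sub>v tensor_vec psi psi = tensor_vec psi psi \<and>
      swap_op d * Om * swap_op d = Om)"

definition largest_eigenvalue :: "complex mat \<Rightarrow> real" where
  "largest_eigenvalue A = Max {r. eigenvalue A (complex_of_real r)}"

definition lambda_star :: "complex vec \<Rightarrow> complex mat \<Rightarrow> real" where
  "lambda_star psi Om = (let d = dim_vec psi in
     largest_eigenvalue ((2 :: complex) \<cdot>\<^sub>m (P_psi psi * P_sym d * Om * P_sym d * P_psi psi)))"

definition gamma_star :: "complex vec \<Rightarrow> complex mat \<Rightarrow> real" where
  "gamma_star psi Om = (let d = dim_vec psi in
     largest_eigenvalue (P_psi psi * swap_op d * Om * P_psi psi))"

definition xi_star :: "complex vec \<Rightarrow> complex mat \<Rightarrow> real" where
  "xi_star psi Om = (let d = dim_vec psi in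
     largest_eigenvalue (P_psi psi * ((1 / 2 :: complex) \<cdot>\<^sub>m swap_op d + 1\<^sub>m (d * d)) * Om * P_psi psi))"

end

theory Submission
  imports Defs
begin

lemma qbit_bit: "qbit j x = (if bit x (j - 1) then 1 else 0)"
  unfolding qbit_def bit_iff_odd by (auto simp: odd_iff_mod_2_eq_one)
lemma xor_lt: "(x::nat) < 2^n \<Longrightarrow> m < 2^n \<Longrightarrow> xor x m < 2^n"
  by (metis take_bit_nat_eq_self_iff take_bit_xor)
lemma qbit_xor: "qbit j (xor x m) = (qbit j x + qbit j m) mod 2"
  unfolding qbit_bit by (auto simp: bit_xor_iff)
lemma qbit_01: "qbit j x = 0 \<or> qbit j x = 1"
  unfolding qbit_def by auto
lemma bits_eq: assumes "(x::nat) < 2^n" "y < 2^n" "\<forall>j\<in>{1..n}. qbit j x = qbit j y" shows "x = y"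
proof (rule bit_eqI)
  fix k show "bit x k = bit y k"
  proof (cases "k < n")
    case True then have "qbit (k+1) x = qbit (k+1) y" using assms(3) by auto
    then show ?thesis unfolding qbit_bit by (auto split: if_splits)
  next
    case False
    have "x < 2^k" "y < 2^k" using assms False by (meson le_less_trans not_less power_increasing_iff one_less_numeral_iff semiring_norm(76) less_le_trans)+
    then show ?thesis by (simp add: bit_iff_odd)
  qed
qed

lemma neg1_mod: "(-1::complex) ^ k = (-1) ^ (k mod 2)"
proof -
  have "(-1::complex) ^ k = (-1) ^ (2 * (k div 2) + k mod 2)" by simp
  also have "\<dots> = (-1) ^ (k mod 2)" by (simp only: power_add power_mult) simp
  finally show ?thesis .
qed

lemma neg1_sq: "(-1::complex) ^ k * (-1) ^ k = 1"
  by (metis power_add power_mult power_minus1_even mult_2 )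

lemma cnj_neg1: "cnj ((-1::complex) ^ k) = (-1) ^ k" by simp

lemma neg1_xor: "(-1::complex) ^ (c * ((a + b) mod 2)) = (-1) ^ (c * a) * (-1) ^ (c * b)"
proof -
  have "(-1::complex) ^ (c * ((a + b) mod 2)) = ((-1) ^ ((a + b) mod 2)) ^ c"
    by (metis power_mult mult.commute)
  also have "\<dots> = ((-1) ^ (a + b)) ^ c" using neg1_mod[of "a+b"] by simp
  also have "\<dots> = (-1) ^ (c * a) * (-1) ^ (c * b)"
    by (simp add: power_add power_mult mult.commute power_mult_distrib)
  finally show ?thesis .
qed

lemma neg1_mod_mult: "(-1::complex) ^ (x * (s mod 2)) = (-1) ^ (x * s)"
proof -
  have "(-1::complex) ^ (x * (s mod 2)) = ((-1) ^ (s mod 2)) ^ x" by (metis power_mult mult.commute)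
  also have "\<dots> = ((-1) ^ s) ^ x" using neg1_mod[of s] by simp
  finally show ?thesis by (simp add: power_mult mult.commute)
qed

lemma prod_if_zero: assumes "finite A"
  shows "(\<Prod>j\<in>A. if P j then f j else (0::'a::comm_semiring_1)) = (if \<forall>j\<in>A. P j then \<Prod>j\<in>A. f j else 0)"
proof (cases "\<forall>j\<in>A. P j")
  case True then show ?thesis by (auto intro: prod.cong)
next
  case False then obtain j where "j \<in> A" "\<not> P j" by auto
  then show ?thesis using assms by (auto intro!: prod_zero)
qed

lemma sum_split_pairs: "(\<Sum>r<(N::nat)*N. h r) = (\<Sum>x<N. \<Sum>y<N. h (x * N + y))"
proof -
  have inj: "inj_on (\<lambda>(x,y). x * N + y) ({..<N} \<times> {..<N})"
  proof (rule inj_onI, clarsimp)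
    fix a b c d assume "a < N" "b < N" "c < N" "d < N" "a * N + b = c * N + d"
    then have "(a * N + b) div N = (c * N + d) div N" "(a * N + b) mod N = (c * N + d) mod N" by auto
    then show "a = c \<and> b = d" using \<open>b<N\<close> \<open>d<N\<close> by auto
  qed
  have img: "(\<lambda>(x,y). x * N + y) ` ({..<N} \<times> {..<N}) = {..<N*N}"
  proof
    show "(\<lambda>(x,y). x * N + y) ` ({..<N} \<times> {..<N}) \<subseteq> {..<N*N}"
    proof clarsimp
      fix a b assume "a < N" "b < N"
      then have "a * N + b < a * N + N" by simp
      also have "\<dots> = (a + 1) * N" by simp
      also have "\<dots> \<le> N * N" using \<open>a<N\<close> by (metis Suc_eq_plus1 Suc_leI mult.commute mult_le_mono2)
      finally show "a * N + b < N * N" .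
    qed
    show "{..<N*N} \<subseteq> (\<lambda>(x,y). x * N + y) ` ({..<N} \<times> {..<N})"
    proof
      fix r assume r: "r \<in> {..<N*N}"
      then have "N > 0" by (cases N) auto
      have "r div N < N" using r \<open>N>0\<close> by (simp add: div_less_iff_less_mult)
      moreover have "r mod N < N" using \<open>N>0\<close> by simp
      ultimately show "r \<in> (\<lambda>(x,y). x * N + y) ` ({..<N} \<times> {..<N})"
        by (intro image_eqI[of _ _ "(r div N, r mod N)"]) auto
    qed
  qed
  have "(\<Sum>r<N*N. h r) = (\<Sum>p\<in>{..<N} \<times> {..<N}. h ((\<lambda>(x,y). x * N + y) p))"
    using sum.reindex[OF inj, of h] img by simp
  also have "\<dots> = (\<Sum>x<N. \<Sum>y<N. h (x * N + y))"
    by (simp add: sum.cartesian_product split_def)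
  finally show ?thesis .
qed

definition bits :: "nat \<Rightarrow> nat \<Rightarrow> nat \<Rightarrow> nat" where
  "bits n x = restrict (\<lambda>j. qbit j x) {1..n}"

lemma card_codes: "card (graph_codes n) = 2 ^ n"
  unfolding graph_codes_def by (simp add: card_PiE numeral_2_eq_2)

lemma bits_bij: "bij_betw (bits n) {..<2^n} (graph_codes n)"
proof -
  have inj: "inj_on (bits n) {..<2^n}"
  proof (rule inj_onI)
    fix x y assume xy: "x \<in> {..<2^n}" "y \<in> {..<2^n}" "bits n x = bits n y"
    have "\<forall>j\<in>{1..n}. qbit j x = qbit j y"
    proof
      fix j assume "j \<in> {1..n}"
      then show "qbit j x = qbit j y" using fun_cong[OF xy(3), of j] by (simp add: bits_def)
    qed
    then show "x = y" using bits_eq xy by auto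
  qed
  have sub: "bits n ` {..<2^n} \<subseteq> graph_codes n"
    using qbit_01 unfolding graph_codes_def bits_def by (auto simp: PiE_iff) (metis One_nat_def qbit_01 less_numeral_extra(3))
  have "card (bits n ` {..<2^n}) = card (graph_codes n)"
    using card_image[OF inj] card_codes by simp
  then have "bits n ` {..<2^n} = graph_codes n"
    using sub by (intro card_subset_eq) (auto simp: graph_codes_def intro!: finite_PiE)
  then show ?thesis using inj by (simp add: bij_betw_def)
qed

lemma sum_codes: "(\<Sum>b\<in>graph_codes n. h b) = (\<Sum>m<2^n. h (bits n m))"
  using sum.reindex[of "bits n" "{..<2^n}" h] bits_bij[of n] by (simp add: bij_betw_def)



locale gs = fixes n :: nat and E :: "nat set set" assumes sgE: "simple_graph n E"
begin

lemma edge_form: "e \<in> E \<Longrightarrow> \<exists>u v. e = {u,v} \<and> u \<in> {1..n} \<and> v \<in> {1..n} \<and> u \<noteq> v"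
  using sgE unfolding simple_graph_def by blast

lemma finE: "finite E"
proof -
  have "E \<subseteq> (\<lambda>(u,v). {u,v}) ` ({1..n} \<times> {1..n})"
    using edge_form by fastforce
  then show ?thesis by (rule finite_subset) auto
qed

lemma edge_mem: assumes "{u,v} \<in> E" shows "u \<in> {1..n}" "v \<in> {1..n}" "u \<noteq> v"
proof -
  obtain a b where ab: "{u,v} = {a,b}" "a \<in> {1..n}" "b \<in> {1..n}" "a \<noteq> b"
    using edge_form[OF assms] by blast
  then show "u \<in> {1..n}" "v \<in> {1..n}" by (auto simp: doubleton_eq_iff)
  show "u \<noteq> v" using ab by (auto simp: doubleton_eq_iff)
qed

definition cc :: "nat \<Rightarrow> nat \<Rightarrow> nat" where
  "cc m u = (\<Sum>v\<in>{v. {u,v}\<in>E}. qbit v m) mod 2"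

lemma parity_bits: "parity_code E (bits n m) u = cc m u"
  unfolding parity_code_def cc_def
  by (rule arg_cong[where f="\<lambda>x. x mod 2"], rule sum.cong) (auto simp: bits_def dest: edge_mem)

definition A2 :: "nat \<Rightarrow> nat \<Rightarrow> nat \<Rightarrow> complex" where
  "A2 m x y = (\<Prod>j\<in>{1..n}. bell_amp (cc m j) (qbit j m) (qbit j x) (qbit j y))"

definition sg :: "nat \<Rightarrow> nat \<Rightarrow> complex" where
  "sg m x = (-1::complex) ^ (\<Sum>j\<in>{1..n}. cc m j * qbit j x)"

definition s0 :: complex where "s0 = complex_of_real ((1 / sqrt 2) ^ n)"

lemma Omega_eq: "Omega_g n E = mat (2^n*2^n) (2^n*2^n) (\<lambda>(r,c).
   \<Sum>m<2^n. A2 m (r div 2^n) (r mod 2^n) * cnj (A2 m (c div 2^n) (c mod 2^n)))"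
  unfolding Omega_g_def
proof (rule cong[OF refl, where f="mat _ _"], rule ext, clarify)
  fix r c
  show "(\<Sum>b\<in>graph_codes n. \<Prod>j\<in>{1..n}.
        bell_amp (parity_code E b j) (b j) (qbit j (r div 2 ^ n)) (qbit j (r mod 2 ^ n))
        * cnj (bell_amp (parity_code E b j) (b j) (qbit j (c div 2 ^ n)) (qbit j (c mod 2 ^ n)))) =
    (\<Sum>m<2^n. A2 m (r div 2^n) (r mod 2^n) * cnj (A2 m (c div 2^n) (c mod 2^n)))"
    unfolding sum_codes A2_def cnj_prod prod.distrib[symmetric] parity_bits
    by (intro sum.cong prod.cong refl) (simp add: bits_def)
qed

lemma xor_xor: "xor x (xor x (m::nat)) = m"
  by (simp add: xor.assoc[symmetric])

lemma A2_formula: assumes "x < 2^n" "y < 2^n" "m < 2^n"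
  shows "A2 m x y = (if y = xor x m then sg m x * s0 else 0)"
proof -
  define c where "c = complex_of_real (1 / sqrt 2)"
  have "A2 m x y = (\<Prod>j\<in>{1..n}. if qbit j y = (qbit j x + qbit j m) mod 2
       then (-1) ^ (cc m j * qbit j x) * c else 0)"
    unfolding A2_def bell_amp_def c_def by simp
  also have "\<dots> = (if \<forall>j\<in>{1..n}. qbit j y = (qbit j x + qbit j m) mod 2
       then \<Prod>j\<in>{1..n}. (-1) ^ (cc m j * qbit j x) * c else 0)"
    by (rule prod_if_zero) simp
  also have "(\<forall>j\<in>{1..n}. qbit j y = (qbit j x + qbit j m) mod 2) \<longleftrightarrow> y = xor x m"
  proof
    assume "\<forall>j\<in>{1..n}. qbit j y = (qbit j x + qbit j m) mod 2"
    then show "y = xor x m" using bits_eq[OF assms(2) xor_lt[OF assms(1,3)]] by (simp add: qbit_xor)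
  qed (simp add: qbit_xor)
  also have "(\<Prod>j\<in>{1..n}. (-1) ^ (cc m j * qbit j x) * c) = (\<Prod>j\<in>{1..n}. (-1::complex) ^ (cc m j * qbit j x)) * c ^ n"
    by (simp only: prod.distrib prod_constant card_atLeastAtMost) simp
  also have "\<dots> = sg m x * s0"
    unfolding sg_def s0_def c_def power_sum of_real_power ..
  finally show ?thesis .
qed

lemma s0_sq: "cnj s0 * s0 = complex_of_real ((1/2) ^ n)"
proof -
  have "((1 / sqrt 2) ^ n) * ((1 / sqrt 2) ^ n) = ((1::real)/2) ^ n"
    by (simp add: power_mult_distrib[symmetric] power_divide real_sqrt_mult[symmetric])
  then show ?thesis unfolding s0_def by (metis complex_cnj_complex_of_real of_real_mult)
qed

lemma sg_sq: "cnj (sg m x) * sg m x = 1"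
  unfolding sg_def by (simp add: neg1_sq)

lemma orth: assumes "m < 2^n" "m' < 2^n"
  shows "(\<Sum>x<2^n. \<Sum>y<2^n. cnj (A2 m x y) * A2 m' x y) = (if m = m' then 1 else 0)"
proof (cases "m = m'")
  case True
  have "(\<Sum>x<2^n. \<Sum>y<2^n. cnj (A2 m x y) * A2 m' x y) = (\<Sum>x<(2::nat)^n. complex_of_real ((1/2) ^ n))"
  proof (rule sum.cong[OF refl])
    fix x assume x: "x \<in> {..<(2::nat)^n}"
    have "(\<Sum>y<2^n. cnj (A2 m x y) * A2 m' x y) = (\<Sum>y<2^n. if y = xor x m then cnj (sg m x * s0) * (sg m x * s0) else 0)"
      using x assms True by (intro sum.cong[OF refl]) (simp add: A2_formula)
    also have "\<dots> = cnj (sg m x * s0) * (sg m x * s0)"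
      using xor_lt[of x n m] x assms by simp
    also have "\<dots> = (cnj (sg m x) * sg m x) * (cnj s0 * s0)" by (simp add: ac_simps)
    finally show "(\<Sum>y<2^n. cnj (A2 m x y) * A2 m' x y) = complex_of_real ((1/2) ^ n)"
      by (simp add: sg_sq s0_sq)
  qed
  also have "\<dots> = of_nat (2^n) * complex_of_real ((1/2) ^ n)" by simp
  also have "\<dots> = 1" by (simp add: power_divide)
  finally show ?thesis using True by simp
next
  case False
  have z: "cnj (A2 m x y) * A2 m' x y = 0" if "x < 2^n" "y < 2^n" for x y
  proof -
    have "\<not> (y = xor x m \<and> y = xor x m')" using False xor_xor by metis
    then show ?thesis using that assms by (auto simp: A2_formula)
  qed
  then show ?thesis using False by (auto intro!: sum.neutral simp: z simp del: mult_eq_0_iff)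
qed

end


definition gram :: "nat \<Rightarrow> nat \<Rightarrow> (nat \<Rightarrow> nat \<Rightarrow> complex) \<Rightarrow> complex mat" where
  "gram D K a = mat D D (\<lambda>(i,j). \<Sum>m<K. a m i * cnj (a m j))"

lemma gram_carrier: "gram D K a \<in> carrier_mat D D" unfolding gram_def by simp

lemma gram_idem: assumes orth: "\<And>m m'. m < K \<Longrightarrow> m' < K \<Longrightarrow> (\<Sum>l<D. cnj (a m l) * a m' l) = (if m = m' then 1 else 0)"
  shows "gram D K a * gram D K a = gram D K a"
proof (rule eq_matI)
  fix i k assume ik: "i < dim_row (gram D K a)" "k < dim_col (gram D K a)"
  then have i: "i < D" and k: "k < D" by (auto simp: gram_def)
  have "(gram D K a * gram D K a) $$ (i,k) = (\<Sum>l<D. (\<Sum>m<K. a m i * cnj (a m l)) * (\<Sum>m'<K. a m' l * cnj (a m' k)))"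
    using i k by (simp add: gram_def scalar_prod_def lessThan_atLeast0)
  also have "\<dots> = (\<Sum>l<D. \<Sum>m<K. \<Sum>m'<K. (a m i * cnj (a m' k)) * (cnj (a m l) * a m' l))"
    unfolding sum_product by (intro sum.cong refl) (simp add: ac_simps)
  also have "\<dots> = (\<Sum>m<K. \<Sum>m'<K. \<Sum>l<D. (a m i * cnj (a m' k)) * (cnj (a m l) * a m' l))"
    by (subst sum.swap) (simp add: sum.swap[of _ "{..<D}"])
  also have "\<dots> = (\<Sum>m<K. \<Sum>m'<K. (a m i * cnj (a m' k)) * (if m = m' then 1 else 0))"
    by (simp add: sum_distrib_left[symmetric] orth)
  also have "\<dots> = (\<Sum>m<K. a m i * cnj (a m k))"
    by (simp add: if_distrib cong: if_cong)
  also have "\<dots> = gram D K a $$ (i,k)" using i k by (simp add: gram_def)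
  finally show "(gram D K a * gram D K a) $$ (i,k) = gram D K a $$ (i,k)" .
qed (auto simp: gram_def)

lemma gram_herm: "i < D \<Longrightarrow> j < D \<Longrightarrow> cnj (gram D K a $$ (j,i)) = gram D K a $$ (i,j)"
  unfolding gram_def by (simp add: ac_simps)

lemma herm_adjoint: assumes "P \<in> carrier_mat D D" "\<And>i j. i < D \<Longrightarrow> j < D \<Longrightarrow> cnj (P $$ (j,i)) = P $$ (i,j)"
  shows "mat_adjoint P = P"
proof (rule eq_matI)
  show "dim_row (mat_adjoint P) = dim_row P" "dim_col (mat_adjoint P) = dim_col P"
    using assms(1) by (auto simp: mat_adjoint_def)
  fix i j assume "i < dim_row P" "j < dim_col P"
  then have "i < D" "j < D" using assms(1) by auto
  then show "mat_adjoint P $$ (i,j) = P $$ (i,j)"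
    using assms by (simp add: mat_adjoint_def mat_of_rows_index)
qed

lemma braket_self: "Im (braket v v) = 0 \<and> 0 \<le> Re (braket v v)"
proof -
  have e: "cnj (v $ i) * v $ i = complex_of_real ((cmod (v $ i))^2)" for i
    by (metis complex_norm_square mult.commute of_real_power)
  show ?thesis unfolding braket_def e by (simp add: Re_sum Im_sum sum_nonneg)
qed

lemma braket_proj: assumes P: "P \<in> carrier_mat D D" and idem: "P * P = P"
  and herm: "\<And>i j. i < D \<Longrightarrow> j < D \<Longrightarrow> cnj (P $$ (j,i)) = P $$ (i,j)"
  and w: "w \<in> carrier_vec D"
  shows "braket w (P *\<^sub>v w) = braket (P *\<^sub>v w) (P *\<^sub>v w)"
proof -
  have dw: "dim_vec w = D" using w by auto
  have Pv: "(P *\<^sub>v w) $ k = (\<Sum>i<D. P $$ (k,i) * w $ i)" if "k < D" for k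
    using that P dw by (simp add: scalar_prod_def lessThan_atLeast0 row_def)
  have PP: "(\<Sum>k<D. P $$ (i,k) * P $$ (k,j)) = P $$ (i,j)" if "i < D" "j < D" for i j
  proof -
    have "(P * P) $$ (i,j) = (\<Sum>k<D. P $$ (i,k) * P $$ (k,j))"
      using that P by (simp add: scalar_prod_def lessThan_atLeast0)
    then show ?thesis using idem by simp
  qed
  have dPw: "dim_vec (P *\<^sub>v w) = D" using P by simp
  have s1: "braket (P *\<^sub>v w) (P *\<^sub>v w) = (\<Sum>k<D. cnj (\<Sum>i<D. P $$ (k,i) * w $ i) * (\<Sum>j<D. P $$ (k,j) * w $ j))"
    unfolding braket_def dPw by (rule sum.cong[OF refl]) (simp only: lessThan_iff Pv)
  have t: "cnj (\<Sum>i<D. P $$ (k,i) * w $ i) * (\<Sum>j<D. P $$ (k,j) * w $ j)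
     = (\<Sum>i<D. \<Sum>j<D. (cnj (w $ i) * w $ j) * (cnj (P $$ (k,i)) * P $$ (k,j)))" for k
    unfolding cnj_sum sum_product by (intro sum.cong refl) simp
  have s3: "(\<Sum>k<D. \<Sum>i<D. \<Sum>j<D. (cnj (w $ i) * w $ j) * (cnj (P $$ (k,i)) * P $$ (k,j)))
     = (\<Sum>i<D. \<Sum>j<D. \<Sum>k<D. (cnj (w $ i) * w $ j) * (cnj (P $$ (k,i)) * P $$ (k,j)))"
    by (subst sum.swap) (rule sum.cong[OF refl], rule sum.swap)
  have s4: "(\<Sum>k<D. (cnj (w $ i) * w $ j) * (cnj (P $$ (k,i)) * P $$ (k,j))) = (cnj (w $ i) * w $ j) * P $$ (i,j)"
    if "i < D" "j < D" for i j
  proof -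
    have "(\<Sum>k<D. (cnj (w $ i) * w $ j) * (cnj (P $$ (k,i)) * P $$ (k,j))) = (cnj (w $ i) * w $ j) * (\<Sum>k<D. P $$ (i,k) * P $$ (k,j))"
      unfolding sum_distrib_left by (rule sum.cong[OF refl]) (simp only: lessThan_iff herm that)
    then show ?thesis using PP[OF that] by simp
  qed
  have s5: "braket w (P *\<^sub>v w) = (\<Sum>i<D. \<Sum>j<D. (cnj (w $ i) * w $ j) * P $$ (i,j))"
  proof -
    have "braket w (P *\<^sub>v w) = (\<Sum>i<D. cnj (w $ i) * (\<Sum>j<D. P $$ (i,j) * w $ j))"
      unfolding braket_def dw by (rule sum.cong[OF refl]) (simp only: lessThan_iff Pv)
    also have "\<dots> = (\<Sum>i<D. \<Sum>j<D. (cnj (w $ i) * w $ j) * P $$ (i,j))"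
      unfolding sum_distrib_left by (intro sum.cong refl) simp
    finally show ?thesis .
  qed
  show ?thesis unfolding s1 t s3 s5 by (intro sum.cong refl) (simp add: s4)
qed

lemma psd_proj: assumes P: "P \<in> carrier_mat D D" and idem: "P * P = P"
  and herm: "\<And>i j. i < D \<Longrightarrow> j < D \<Longrightarrow> cnj (P $$ (j,i)) = P $$ (i,j)"
  shows "psd D P"
  unfolding psd_def using P braket_proj[OF P idem herm] braket_self by auto

lemma compl_idem: assumes P: "(P :: complex mat) \<in> carrier_mat D D" and idem: "P * P = P"
  shows "(1\<^sub>m D - P) * (1\<^sub>m D - P) = 1\<^sub>m D - P"
proof -
  have "(1\<^sub>m D - P) * (1\<^sub>m D - P) = (1\<^sub>m D - P) * 1\<^sub>m D - (1\<^sub>m D - P) * P"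
    using P by (intro mult_minus_distrib_mat) auto
  also have "(1\<^sub>m D - P) * P = P - P * P"
    using P by (subst minus_mult_distrib_mat) auto
  also have "\<dots> = 0\<^sub>m D D" using idem P by simp
  finally show ?thesis using P by (auto intro!: eq_matI)
qed

lemma compl_herm: assumes "\<And>i j. i < D \<Longrightarrow> j < D \<Longrightarrow> cnj (P $$ (j,i)) = P $$ (i,j)"
  and P: "P \<in> carrier_mat D D"
  shows "i < D \<Longrightarrow> j < D \<Longrightarrow> cnj ((1\<^sub>m D - P) $$ (j,i)) = (1\<^sub>m D - P) $$ (i,j)"
  using assms by auto



context gs begin

definition Cz :: "nat \<Rightarrow> complex" where "Cz x = (\<Prod>e\<in>E. cz_phase e x)"

lemma double_count:
  "(\<Sum>e\<in>E. \<Sum>u\<in>e. \<Sum>v\<in>e-{u}. f u v) = (\<Sum>u\<in>{1..n}. \<Sum>v\<in>{v. {u,v}\<in>E}. (f u v :: nat))"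
proof -
  define S where "S = Sigma E (\<lambda>e. Sigma e (\<lambda>u. e - {u}))"
  define T where "T = Sigma {1..n} (\<lambda>u. {v. {u,v}\<in>E})"
  have finS: "\<And>e. e \<in> E \<Longrightarrow> finite e" using edge_form by fastforce
  have nbsub: "{v. {u,v}\<in>E} \<subseteq> {1..n}" for u using edge_mem by blast
  have finT: "finite {v. {u,v}\<in>E}" for u using nbsub finite_subset by blast
  have "(\<Sum>e\<in>E. \<Sum>u\<in>e. \<Sum>v\<in>e-{u}. f u v) = (\<Sum>(e,p)\<in>S. (\<lambda>(u,v). f u v) p)"
  proof -
    have "(\<Sum>e\<in>E. \<Sum>u\<in>e. \<Sum>v\<in>e-{u}. f u v) = (\<Sum>e\<in>E. \<Sum>p\<in>Sigma e (\<lambda>u. e-{u}). (\<lambda>(u,v). f u v) p)"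
      by (rule sum.cong[OF refl], rule sum.Sigma) (auto simp: finS)
    also have "\<dots> = (\<Sum>(e,p)\<in>S. (\<lambda>(u,v). f u v) p)"
      unfolding S_def by (rule sum.Sigma[OF finE]) (auto simp: finS)
    finally show ?thesis .
  qed
  also have "\<dots> = (\<Sum>(u,v)\<in>T. f u v)"
  proof (rule sum.reindex_bij_witness[where i="\<lambda>(u,v). ({u,v},(u,v))" and j="\<lambda>(e,p). p"])
    fix a assume a: "a \<in> S"
    then obtain e u v where aa: "a = (e,u,v)" "e \<in> E" "u \<in> e" "v \<in> e" "v \<noteq> u" unfolding S_def by auto
    obtain x y where "e = {x,y}" "x \<noteq> y" using edge_form[OF aa(2)] by blast
    then have ee: "e = {u,v}" using aa by auto
    show "(\<lambda>(u,v). ({u,v},(u,v))) ((\<lambda>(e,p). p) a) = a" using aa ee by simp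
    show "(\<lambda>(e,p). p) a \<in> T" using aa ee edge_mem[of u v] unfolding T_def by auto
    show "(\<lambda>(u,v). f u v) ((\<lambda>(e,p). p) a) = (\<lambda>(e,p). (\<lambda>(u,v). f u v) p) a" using aa by simp
  next
    fix b assume b: "b \<in> T"
    then obtain u v where bb: "b = (u,v)" "{u,v} \<in> E" unfolding T_def by auto
    show "(\<lambda>(e,p). p) ((\<lambda>(u,v). ({u,v},(u,v))) b) = b" using bb by simp
    show "(\<lambda>(u,v). ({u,v},(u,v))) b \<in> S" using bb edge_mem[OF bb(2)] unfolding S_def by auto
  qed
  also have "\<dots> = (\<Sum>u\<in>{1..n}. \<Sum>v\<in>{v. {u,v}\<in>E}. f u v)"
    unfolding T_def using finT by (subst sum.Sigma) auto
  finally show ?thesis .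
qed

lemma cz_edge: assumes "e \<in> E"
  shows "cz_phase e (xor x m) = cz_phase e x * cz_phase e m * (-1) ^ (\<Sum>u\<in>e. \<Sum>v\<in>e-{u}. qbit u x * qbit v m)"
proof -
  obtain u v where e: "e = {u,v}" "u \<noteq> v" using edge_form[OF assms] by blast
  have s: "(\<Sum>u\<in>e. \<Sum>v\<in>e-{u}. qbit u x * qbit v m) = qbit u x * qbit v m + qbit v x * qbit u m"
    using e by (simp add: insert_Diff_if)
  show ?thesis unfolding s using e qbit_01[of u x] qbit_01[of v x] qbit_01[of u m] qbit_01[of v m]
    by (auto simp: cz_phase_def qbit_xor)
qed

lemma Cz_xor: "Cz (xor x m) = Cz x * Cz m * sg m x"
proof -
  have "Cz (xor x m) = (\<Prod>e\<in>E. cz_phase e x * cz_phase e m * (-1) ^ (\<Sum>u\<in>e. \<Sum>v\<in>e-{u}. qbit u x * qbit v m))"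
    unfolding Cz_def by (rule prod.cong[OF refl]) (rule cz_edge)
  also have "\<dots> = Cz x * Cz m * (-1) ^ (\<Sum>e\<in>E. \<Sum>u\<in>e. \<Sum>v\<in>e-{u}. qbit u x * qbit v m)"
    unfolding Cz_def prod.distrib power_sum ..
  also have "(\<Sum>e\<in>E. \<Sum>u\<in>e. \<Sum>v\<in>e-{u}. qbit u x * qbit v m) = (\<Sum>u\<in>{1..n}. \<Sum>v\<in>{v. {u,v}\<in>E}. qbit u x * qbit v m)"
    by (rule double_count)
  also have "(-1::complex) ^ \<dots> = sg m x"
  proof -
    have "(-1::complex) ^ (\<Sum>u\<in>{1..n}. \<Sum>v\<in>{v. {u,v}\<in>E}. qbit u x * qbit v m)
        = (\<Prod>u\<in>{1..n}. (-1) ^ (qbit u x * (\<Sum>v\<in>{v. {u,v}\<in>E}. qbit v m)))"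
      by (simp add: power_sum sum_distrib_left)
    also have "\<dots> = (\<Prod>u\<in>{1..n}. (-1) ^ (cc m u * qbit u x))"
      unfolding cc_def by (rule prod.cong[OF refl]) (simp add: neg1_mod_mult mult.commute)
    finally show ?thesis unfolding sg_def power_sum .
  qed
  finally show ?thesis .
qed

end


context gs begin

definition Am :: "nat \<Rightarrow> nat \<Rightarrow> complex" where "Am m r = A2 m (r div 2^n) (r mod 2^n)"

lemma Omega_gram: "Omega_g n E = gram (2^n*2^n) (2^n) Am"
  unfolding Omega_eq gram_def Am_def ..

lemma orth_r: assumes "m < 2^n" "m' < 2^n"
  shows "(\<Sum>l<2^n*2^n. cnj (Am m l) * Am m' l) = (if m = m' then 1 else 0)"
proof -
  have "(\<Sum>l<2^n*2^n. cnj (Am m l) * Am m' l) = (\<Sum>x<2^n. \<Sum>y<2^n. cnj (A2 m x y) * A2 m' x y)"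
    unfolding sum_split_pairs Am_def by (intro sum.cong refl) simp
  then show ?thesis using orth[OF assms] by simp
qed

lemma Om_carrier: "Omega_g n E \<in> carrier_mat (2^n*2^n) (2^n*2^n)"
  unfolding Omega_gram by (rule gram_carrier)

lemma Om_idem: "Omega_g n E * Omega_g n E = Omega_g n E"
  unfolding Omega_gram by (rule gram_idem) (rule orth_r)

lemma Om_herm: "i < 2^n*2^n \<Longrightarrow> j < 2^n*2^n \<Longrightarrow> cnj (Omega_g n E $$ (j,i)) = Omega_g n E $$ (i,j)"
  unfolding Omega_gram by (rule gram_herm)

lemma Om_entry: "i < 2^n*2^n \<Longrightarrow> j < 2^n*2^n \<Longrightarrow> Omega_g n E $$ (i,j) = (\<Sum>m<2^n. Am m i * cnj (Am m j))"
  unfolding Omega_gram gram_def by simp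

definition sw :: "nat \<Rightarrow> nat" where "sw r = (r mod 2^n) * 2^n + r div 2^n"

lemma divN: "r < 2^n*2^n \<Longrightarrow> r div 2^n < (2::nat)^n"
  by (simp add: div_less_iff_less_mult)

lemma sw_props: assumes "r < 2^n*2^n"
  shows "sw r < 2^n*2^n" "sw r div 2^n = r mod 2^n" "sw r mod 2^n = r div 2^n" "sw (sw r) = r"
proof -
  have d: "r div 2^n < 2^n" using divN[OF assms] .
  have m: "r mod 2^n < (2::nat)^n" by simp
  show 1: "sw r div 2^n = r mod 2^n" "sw r mod 2^n = r div 2^n" unfolding sw_def using d by auto
  have "sw r < (r mod 2^n + 1) * 2^n" unfolding sw_def using d by simp
  also have "\<dots> \<le> 2^n * 2^n" using m by (metis Suc_eq_plus1 Suc_leI mult_le_mono1)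
  finally show "sw r < 2^n*2^n" .
  show "sw (sw r) = r" unfolding sw_def[of "sw r"] 1 by (rule div_mult_mod_eq)
qed

lemma swap_entry: assumes "i < 2^n*2^n" "j < 2^n*2^n"
  shows "swap_op (2^n) $$ (i,j) = (if j = sw i then 1 else 0)"
proof -
  have "(i div 2^n = j mod 2^n \<and> i mod 2^n = j div 2^n) \<longleftrightarrow> j = sw i"
  proof
    assume h: "i div 2^n = j mod 2^n \<and> i mod 2^n = j div 2^n"
    have "j = (j div 2^n) * 2^n + j mod 2^n" by (rule div_mult_mod_eq[symmetric])
    then show "j = sw i" unfolding sw_def using h by simp
  qed (use sw_props[OF assms(1)] in auto)
  then show ?thesis using assms unfolding swap_op_def by simp
qed

lemma F_carrier: "swap_op (2^n) \<in> carrier_mat (2^n*2^n) (2^n*2^n)"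
  unfolding swap_op_def by simp

lemma F_mult: assumes M: "M \<in> carrier_mat (2^n*2^n) (2^n*2^n)" and ij: "i < 2^n*2^n" "j < 2^n*2^n"
  shows "(swap_op (2^n) * M) $$ (i,j) = M $$ (sw i, j)"
proof -
  have "(swap_op (2^n) * M) $$ (i,j) = (\<Sum>k<2^n*2^n. swap_op (2^n) $$ (i,k) * M $$ (k,j))"
    using M ij F_carrier by (simp add: scalar_prod_def lessThan_atLeast0)
  also have "\<dots> = (\<Sum>k<2^n*2^n. if k = sw i then M $$ (k,j) else 0)"
    using ij by (intro sum.cong refl) (simp add: swap_entry)
  also have "\<dots> = M $$ (sw i, j)" using sw_props(1)[OF ij(1)] by simp
  finally show ?thesis .
qed

lemma mult_F: assumes M: "M \<in> carrier_mat (2^n*2^n) (2^n*2^n)" and ij: "i < 2^n*2^n" "j < 2^n*2^n"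
  shows "(M * swap_op (2^n)) $$ (i,j) = M $$ (i, sw j)"
proof -
  have "(M * swap_op (2^n)) $$ (i,j) = (\<Sum>k<2^n*2^n. M $$ (i,k) * swap_op (2^n) $$ (k,j))"
    using M ij F_carrier by (simp add: scalar_prod_def lessThan_atLeast0)
  also have "\<dots> = (\<Sum>k<2^n*2^n. if k = sw j then M $$ (i,k) else 0)"
  proof (intro sum.cong refl)
    fix k :: nat assume "k \<in> {..<2^n*2^n}"
    then have k: "k < 2^n*2^n" by simp
    have "(j = sw k) = (k = sw j)" using sw_props(4)[OF k] sw_props(4)[OF ij(2)] by metis
    then show "M $$ (i,k) * swap_op (2^n) $$ (k,j) = (if k = sw j then M $$ (i,k) else 0)"
      using k ij by (simp add: swap_entry)
  qed
  also have "\<dots> = M $$ (i, sw j)" using sw_props(1)[OF ij(2)] by simp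
  finally show ?thesis .
qed

lemma FF: "swap_op (2^n) * swap_op (2^n) = 1\<^sub>m (2^n*2^n)"
proof (rule eq_matI)
  fix i j assume "i < dim_row (1\<^sub>m (2^n*2^n) :: complex mat)" "j < dim_col (1\<^sub>m (2^n*2^n) :: complex mat)"
  then have ij: "i < 2^n*2^n" "j < 2^n*2^n" by auto
  have "(swap_op (2^n) * swap_op (2^n)) $$ (i,j) = swap_op (2^n) $$ (sw i, j)"
    using F_mult[OF F_carrier ij] .
  also have "\<dots> = (if j = i then 1 else 0)"
    using swap_entry[OF sw_props(1)[OF ij(1)] ij(2)] sw_props(4)[OF ij(1)] by simp
  finally show "(swap_op (2^n) * swap_op (2^n)) $$ (i,j) = 1\<^sub>m (2^n*2^n) $$ (i,j)" using ij by auto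
qed (use F_carrier in auto)

definition eps :: "nat \<Rightarrow> complex" where "eps m = (-1) ^ (\<Sum>j\<in>{1..n}. cc m j * qbit j m)"

lemma sg_xor: "sg m (xor x m) = sg m x * eps m"
  unfolding sg_def eps_def qbit_xor power_sum neg1_xor prod.distrib ..

lemma Am_sw: assumes m: "m < 2^n" and r: "r < 2^n*2^n"
  shows "Am m (sw r) = eps m * Am m r"
proof -
  define x where "x = r div 2^n"
  define y where "y = r mod 2^n"
  have x: "x < 2^n" unfolding x_def using divN[OF r] .
  have y: "y < 2^n" unfolding y_def by simp
  have "Am m (sw r) = A2 m y x" unfolding Am_def x_def y_def using sw_props[OF r] by simp
  also have "\<dots> = (if x = xor y m then sg m y * s0 else 0)" using A2_formula[OF y x m] .
  also have "\<dots> = (if y = xor x m then sg m x * eps m * s0 else 0)"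
  proof (cases "y = xor x m")
    case True
    then have "x = xor y m" by (simp add: xor.assoc)
    then show ?thesis using True sg_xor by simp
  next
    case False
    then have "x \<noteq> xor y m" by (auto simp: xor.assoc)
    then show ?thesis using False by simp
  qed
  also have "\<dots> = eps m * Am m r" unfolding Am_def x_def[symmetric] y_def[symmetric]
    using A2_formula[OF x y m] by simp
  finally show ?thesis .
qed

lemma eps_sq: "cnj (eps m) * eps m = 1" unfolding eps_def by (simp add: neg1_sq)

lemma FOmF: "swap_op (2^n) * Omega_g n E * swap_op (2^n) = Omega_g n E"
proof (rule eq_matI)
  have c1: "swap_op (2^n) * Omega_g n E \<in> carrier_mat (2^n*2^n) (2^n*2^n)"
    using F_carrier Om_carrier by simp
  fix i j assume "i < dim_row (Omega_g n E)" "j < dim_col (Omega_g n E)"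
  then have ij: "i < 2^n*2^n" "j < 2^n*2^n" using Om_carrier by auto
  have "(swap_op (2^n) * Omega_g n E * swap_op (2^n)) $$ (i,j) = Omega_g n E $$ (sw i, sw j)"
    using mult_F[OF c1 ij] F_mult[OF Om_carrier ij(1) sw_props(1)[OF ij(2)]] by simp
  also have "\<dots> = (\<Sum>m<2^n. Am m (sw i) * cnj (Am m (sw j)))"
    using Om_entry sw_props(1) ij by simp
  also have "\<dots> = (\<Sum>m<2^n. (cnj (eps m) * eps m) * (Am m i * cnj (Am m j)))"
    using ij by (intro sum.cong refl) (simp add: Am_sw ac_simps)
  also have "\<dots> = Omega_g n E $$ (i,j)" using ij by (simp add: eps_sq Om_entry)
  finally show "(swap_op (2^n) * Omega_g n E * swap_op (2^n)) $$ (i,j) = Omega_g n E $$ (i,j)" .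
qed (use Om_carrier F_carrier in auto)

end


lemma pair_lt: "(x::nat) < N \<Longrightarrow> y < N \<Longrightarrow> x * N + y < N * N"
proof -
  assume a: "x < N" "y < N"
  then have "x * N + y < (x + 1) * N" by simp
  also have "\<dots> \<le> N * N" using a by (metis Suc_eq_plus1 Suc_leI mult_le_mono1)
  finally show ?thesis .
qed

lemma tensor_idx: assumes "u \<in> carrier_vec N" "v \<in> carrier_vec N" "r < N * N"
  shows "tensor_vec u v $ r = u $ (r div N) * v $ (r mod N)"
  using assms unfolding tensor_vec_def by simp

lemma tensor_dim: "u \<in> carrier_vec N \<Longrightarrow> v \<in> carrier_vec N \<Longrightarrow> tensor_vec u v \<in> carrier_vec (N * N)"
  unfolding tensor_vec_def by simp

context gs begin

definition sig :: complex where "sig = complex_of_real (1 / sqrt (2^n))"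

lemma G_dim: "graph_state n E \<in> carrier_vec (2^n)" unfolding graph_state_def by simp

lemma G_idx: "x < 2^n \<Longrightarrow> graph_state n E $ x = Cz x * sig"
  unfolding graph_state_def Cz_def sig_def by simp

lemma cz_real: "cnj (cz_phase e x) = cz_phase e x" by (simp add: cz_phase_def)
lemma cz_sq: "cz_phase e x * cz_phase e x = 1" by (simp add: cz_phase_def)
lemma Cz_real: "cnj (Cz x) = Cz x" unfolding Cz_def cnj_prod cz_real ..
lemma Cz_sq: "Cz x * Cz x = 1" unfolding Cz_def prod.distrib[symmetric] cz_sq by simp

lemma s0_real: "cnj s0 = s0" unfolding s0_def by simp
lemma sig_real: "cnj sig = sig" unfolding sig_def by simp
lemma sg_real: "cnj (sg m x) = sg m x" unfolding sg_def by simp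

lemma sig_sq: "sig * sig = s0 * s0"
proof -
  have "sig * sig = complex_of_real ((1 / sqrt (2^n)) * (1 / sqrt (2^n)))" unfolding sig_def by (simp only: of_real_mult)
  also have "(1 / sqrt (2^n)) * (1 / sqrt (2^n)) = ((1::real)/2)^n"
    by (simp add: power_divide)
  finally show ?thesis using s0_sq s0_real by simp
qed

lemma G_real: "x < 2^n \<Longrightarrow> cnj (graph_state n E $ x) = graph_state n E $ x"
  by (simp add: G_idx Cz_real sig_real)

lemma braket_GG: "braket (graph_state n E) (graph_state n E) = 1"
proof -
  have "braket (graph_state n E) (graph_state n E) = (\<Sum>x<(2::nat)^n. s0 * s0)"
    unfolding braket_def using G_dim
    by (intro sum.cong) (auto simp: G_idx Cz_real sig_real sig_sq[symmetric] Cz_sq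
        simp del: mult.assoc intro: mult.assoc[symmetric] | simp add: ac_simps Cz_sq)+
  also have "\<dots> = of_nat (2^n) * complex_of_real ((1/2)^n)" using s0_sq s0_real by simp
  also have "\<dots> = 1" by (simp add: power_divide)
  finally show ?thesis .
qed

lemma sum_xor: assumes "m < 2^n" shows "(\<Sum>x<2^n. h (xor x m)) = (\<Sum>x<(2::nat)^n. h x)"
  by (rule sum.reindex_bij_witness[where i="\<lambda>x. xor x m" and j="\<lambda>x. xor x m"])
     (auto simp: xor_lt assms xor.assoc)

lemma sgCz: "sg m x * Cz x = Cz m * Cz (xor x m)"
proof -
  have "Cz m * Cz (xor x m) = (Cz m * Cz m) * Cz x * sg m x" unfolding Cz_xor by (simp add: ac_simps)
  then show ?thesis by (simp add: Cz_sq mult.commute)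
qed


lemma inner_Am: assumes w: "w \<in> carrier_vec (2^n)" and m: "m < 2^n"
  shows "(\<Sum>s<2^n*2^n. cnj (Am m s) * tensor_vec (graph_state n E) w $ s) = s0 * Cz m * braket (graph_state n E) w"
proof -
  let ?G = "graph_state n E"
  have "(\<Sum>s<2^n*2^n. cnj (Am m s) * tensor_vec ?G w $ s) = (\<Sum>x<2^n. \<Sum>y<2^n. cnj (A2 m x y) * (?G $ x * w $ y))"
    unfolding sum_split_pairs Am_def
    by (intro sum.cong refl) (simp add: tensor_idx[OF G_dim w] pair_lt)
  also have "\<dots> = (\<Sum>x<2^n. cnj (sg m x * s0) * (?G $ x * w $ (xor x m)))"
  proof (intro sum.cong refl)
    fix x :: nat assume "x \<in> {..<2^n}"
    then have x: "x < 2^n" by simp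
    have "(\<Sum>y<2^n. cnj (A2 m x y) * (?G $ x * w $ y)) = (\<Sum>y<2^n. if y = xor x m then cnj (sg m x * s0) * (?G $ x * w $ y) else 0)"
      using x m by (intro sum.cong refl) (simp add: A2_formula)
    also have "\<dots> = cnj (sg m x * s0) * (?G $ x * w $ (xor x m))"
      using xor_lt[OF x m] by simp
    finally show "(\<Sum>y<2^n. cnj (A2 m x y) * (?G $ x * w $ y)) = cnj (sg m x * s0) * (?G $ x * w $ (xor x m))" .
  qed
  also have "\<dots> = (\<Sum>x<2^n. s0 * Cz m * (?G $ (xor x m) * w $ (xor x m)))"
  proof (intro sum.cong refl)
    fix x :: nat assume "x \<in> {..<2^n}"
    then have x: "x < 2^n" by simp
    have "cnj (sg m x * s0) * (?G $ x * w $ (xor x m)) = s0 * ((sg m x * Cz x) * sig * w $ (xor x m))"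
      using x by (simp add: G_idx sg_real s0_real ac_simps)
    also have "\<dots> = s0 * Cz m * (?G $ (xor x m) * w $ (xor x m))"
      unfolding sgCz using xor_lt[OF x m] by (simp add: G_idx ac_simps)
    finally show "cnj (sg m x * s0) * (?G $ x * w $ (xor x m)) = s0 * Cz m * (?G $ (xor x m) * w $ (xor x m))" .
  qed
  also have "\<dots> = s0 * Cz m * (\<Sum>x<2^n. ?G $ x * w $ x)"
    unfolding sum_distrib_left[symmetric] using sum_xor[OF m, of "\<lambda>x. ?G $ x * w $ x"] by simp
  also have "(\<Sum>x<2^n. ?G $ x * w $ x) = braket ?G w"
    unfolding braket_def using G_dim by (intro sum.cong) (auto simp: G_real)
  finally show ?thesis .
qed

lemma Om_Gw: assumes w: "w \<in> carrier_vec (2^n)"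
  shows "Omega_g n E *\<^sub>v tensor_vec (graph_state n E) w = braket (graph_state n E) w \<cdot>\<^sub>v tensor_vec (graph_state n E) (graph_state n E)"
proof (rule eq_vecI)
  let ?G = "graph_state n E"
  let ?v = "tensor_vec ?G w"
  let ?c = "braket ?G w"
  have vd: "?v \<in> carrier_vec (2^n*2^n)" using tensor_dim[OF G_dim w] .
  show "dim_vec (Omega_g n E *\<^sub>v ?v) = dim_vec (?c \<cdot>\<^sub>v tensor_vec ?G ?G)"
    using Om_carrier tensor_dim[OF G_dim G_dim] by simp
  fix r assume "r < dim_vec (?c \<cdot>\<^sub>v tensor_vec ?G ?G)"
  then have r: "r < 2^n*2^n" using tensor_dim[OF G_dim G_dim] by simp
  define x where "x = r div 2^n"
  define y where "y = r mod 2^n"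
  have x: "x < 2^n" unfolding x_def using divN[OF r] .
  have y: "y < 2^n" unfolding y_def by simp
  define m0 where "m0 = xor x y"
  have m0: "m0 < 2^n" unfolding m0_def using xor_lt[OF x y] .
  have "(Omega_g n E *\<^sub>v ?v) $ r = (\<Sum>c<2^n*2^n. Omega_g n E $$ (r,c) * ?v $ c)"
    using r Om_carrier vd by (simp add: scalar_prod_def lessThan_atLeast0 row_def)
  also have "\<dots> = (\<Sum>c<2^n*2^n. \<Sum>m<2^n. Am m r * (cnj (Am m c) * ?v $ c))"
    using r by (intro sum.cong refl) (simp add: Om_entry sum_distrib_right mult.assoc)
  also have "\<dots> = (\<Sum>m<2^n. Am m r * (\<Sum>c<2^n*2^n. cnj (Am m c) * ?v $ c))"
    by (subst sum.swap) (simp add: sum_distrib_left)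
  also have "\<dots> = (\<Sum>m<2^n. Am m r * (s0 * Cz m * ?c))"
    by (intro sum.cong refl) (simp add: inner_Am[OF w])
  also have "\<dots> = (\<Sum>m<2^n. if m = m0 then sg m0 x * s0 * (s0 * Cz m0 * ?c) else 0)"
  proof (intro sum.cong refl)
    fix m :: nat assume "m \<in> {..<2^n}"
    then have m: "m < 2^n" by simp
    have e: "(y = xor x m) = (m = m0)" unfolding m0_def using xor_xor by metis
    show "Am m r * (s0 * Cz m * ?c) = (if m = m0 then sg m0 x * s0 * (s0 * Cz m0 * ?c) else 0)"
      unfolding Am_def x_def[symmetric] y_def[symmetric] A2_formula[OF x y m] e by simp
  qed
  also have "\<dots> = sg m0 x * s0 * (s0 * Cz m0 * ?c)" using m0 by simp
  also have "\<dots> = (?c \<cdot>\<^sub>v tensor_vec ?G ?G) $ r"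
  proof -
    have yy: "y = xor x m0" unfolding m0_def using xor_xor by metis
    have "(?c \<cdot>\<^sub>v tensor_vec ?G ?G) $ r = ?c * (Cz x * sig * (Cz y * sig))"
      using r tensor_dim[OF G_dim G_dim] by (simp add: tensor_idx[OF G_dim G_dim r] G_idx x y x_def[symmetric] y_def[symmetric])
    also have "Cz y = Cz x * Cz m0 * sg m0 x" unfolding yy by (rule Cz_xor)
    finally have "(?c \<cdot>\<^sub>v tensor_vec ?G ?G) $ r = ?c * ((Cz x * Cz x) * Cz m0 * sg m0 x * (sig * sig))"
      by (simp add: ac_simps)
    then show ?thesis by (simp add: Cz_sq sig_sq ac_simps)
  qed
  finally show "(Omega_g n E *\<^sub>v ?v) $ r = (?c \<cdot>\<^sub>v tensor_vec ?G ?G) $ r" .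
qed

lemma F_tensor: assumes u: "u \<in> carrier_vec (2^n)" and v: "v \<in> carrier_vec (2^n)"
  shows "swap_op (2^n) *\<^sub>v tensor_vec u v = tensor_vec v u"
proof (rule eq_vecI)
  show "dim_vec (swap_op (2^n) *\<^sub>v tensor_vec u v) = dim_vec (tensor_vec v u)"
    using F_carrier tensor_dim[OF v u] by simp
  fix r assume "r < dim_vec (tensor_vec v u)"
  then have r: "r < 2^n*2^n" using tensor_dim[OF v u] by simp
  have "(swap_op (2^n) *\<^sub>v tensor_vec u v) $ r = (\<Sum>c<2^n*2^n. swap_op (2^n) $$ (r,c) * tensor_vec u v $ c)"
    using r F_carrier tensor_dim[OF u v] by (simp add: scalar_prod_def lessThan_atLeast0 row_def)
  also have "\<dots> = (\<Sum>c<2^n*2^n. if c = sw r then tensor_vec u v $ c else 0)"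
    using r by (intro sum.cong refl) (simp add: swap_entry)
  also have "\<dots> = tensor_vec u v $ sw r" using sw_props(1)[OF r] by simp
  also have "\<dots> = tensor_vec v u $ r"
    using sw_props[OF r] by (simp add: tensor_idx[OF u v] tensor_idx[OF v u r] mult.commute)
  finally show "(swap_op (2^n) *\<^sub>v tensor_vec u v) $ r = tensor_vec v u $ r" .
qed

lemma Om_wG: assumes w: "w \<in> carrier_vec (2^n)"
  shows "Omega_g n E *\<^sub>v tensor_vec w (graph_state n E) = braket (graph_state n E) w \<cdot>\<^sub>v tensor_vec (graph_state n E) (graph_state n E)"
proof -
  let ?G = "graph_state n E" and ?F = "swap_op (2^n)" and ?O = "Omega_g n E"
  have "?O *\<^sub>v tensor_vec w ?G = (?F * ?O * ?F) *\<^sub>v tensor_vec w ?G" using FOmF by simp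
  also have "\<dots> = ?F *\<^sub>v (?O *\<^sub>v (?F *\<^sub>v tensor_vec w ?G))"
    using F_carrier Om_carrier tensor_dim[OF w G_dim]
    by (simp add: assoc_mult_mat_vec[of _ _ "2^n*2^n" _ "2^n*2^n"])
  also have "\<dots> = ?F *\<^sub>v (braket ?G w \<cdot>\<^sub>v tensor_vec ?G ?G)"
    by (simp add: F_tensor[OF w G_dim] Om_Gw[OF w])
  also have "\<dots> = braket ?G w \<cdot>\<^sub>v tensor_vec ?G ?G"
    using F_carrier tensor_dim[OF G_dim G_dim] by (simp add: mult_mat_vec F_tensor[OF G_dim G_dim])
  finally show ?thesis .
qed

end


lemma zero_eig1: assumes "eigenvalue (0\<^sub>m D D :: complex mat) k" shows "k = 0"
proof -
  obtain v where v: "v \<in> carrier_vec D" "v \<noteq> 0\<^sub>v D" "0\<^sub>m D D *\<^sub>v v = k \<cdot>\<^sub>v v"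
    using assms unfolding eigenvalue_def eigenvector_def by auto
  from v(1,2) obtain i where i: "i < D" "v $ i \<noteq> 0" by (metis eq_vecI carrier_vecD index_zero_vec)
  have "(0\<^sub>m D D *\<^sub>v v) $ i = 0" using i v(1) by (simp add: scalar_prod_def)
  then have "k * v $ i = 0" using v(3) i v(1) by (metis index_smult_vec(1) carrier_vecD)
  then show "k = 0" using i by simp
qed

lemma zero_eig2: assumes D: "D > 0" shows "eigenvalue (0\<^sub>m D D :: complex mat) 0"
proof -
  have "unit_vec D 0 \<noteq> (0\<^sub>v D :: complex vec)"
  proof
    assume "unit_vec D 0 = (0\<^sub>v D :: complex vec)"
    then have "unit_vec D 0 $ 0 = (0\<^sub>v D :: complex vec) $ 0" by simp
    then show False using D by simp
  qed
  moreover have "0\<^sub>m D D *\<^sub>v unit_vec D 0 = (0::complex) \<cdot>\<^sub>v unit_vec D 0"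
    by (rule eq_vecI) (auto simp: scalar_prod_def)
  ultimately show ?thesis unfolding eigenvalue_def eigenvector_def by (intro exI[of _ "unit_vec D 0"]) auto
qed

lemma zero_eig: assumes D: "D > 0" shows "largest_eigenvalue (0\<^sub>m D D :: complex mat) = 0"
proof -
  have "{r. eigenvalue (0\<^sub>m D D :: complex mat) (complex_of_real r)} = {0}"
    using zero_eig1[of D] zero_eig2[OF D] by auto
  then show ?thesis unfolding largest_eigenvalue_def by simp
qed

context gs begin

lemma kb_carrier: "ket_bra (graph_state n E) \<in> carrier_mat (2^n) (2^n)"
  using G_dim unfolding ket_bra_def by auto

lemma P_carrier: "P_psi (graph_state n E) \<in> carrier_mat (2^n*2^n) (2^n*2^n)"
  using G_dim kb_carrier unfolding P_psi_def tensor_mat_def by auto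

lemma Om_P: "Omega_g n E * P_psi (graph_state n E) = 0\<^sub>m (2^n*2^n) (2^n*2^n)"
proof (rule eq_matI)
  let ?G = "graph_state n E" and ?P = "P_psi (graph_state n E)" and ?N = "(2::nat)^n"
  fix i j assume "i < dim_row (0\<^sub>m (2^n*2^n) (2^n*2^n) :: complex mat)" "j < dim_col (0\<^sub>m (2^n*2^n) (2^n*2^n) :: complex mat)"
  then have ij: "i < 2^n*2^n" "j < 2^n*2^n" by auto
  define j1 where "j1 = j div 2^n"
  define j2 where "j2 = j mod 2^n"
  have j1: "j1 < 2^n" unfolding j1_def using divN[OF ij(2)] .
  have j2: "j2 < 2^n" unfolding j2_def by simp
  define w where "w = vec ?N (\<lambda>k. cnj (?G $ j1) * ((if k = j2 then 1 else 0) - ?G $ k * cnj (?G $ j2)))"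
  have w: "w \<in> carrier_vec ?N" unfolding w_def by simp
  have col: "col ?P j = tensor_vec ?G w"
  proof (rule eq_vecI)
    show "dim_vec (col ?P j) = dim_vec (tensor_vec ?G w)" using P_carrier tensor_dim[OF G_dim w] by simp
    fix k assume "k < dim_vec (tensor_vec ?G w)"
    then have k: "k < 2^n*2^n" using tensor_dim[OF G_dim w] by simp
    have k1: "k div 2^n < 2^n" using divN[OF k] .
    have k2: "k mod 2^n < (2::nat)^n" by simp
    have t: "tensor_vec ?G w $ k = ?G $ (k div 2^n) * (cnj (?G $ j1) * ((if k mod 2^n = j2 then 1 else 0) - ?G $ (k mod 2^n) * cnj (?G $ j2)))"
      unfolding tensor_idx[OF G_dim w k] using k2 by (simp add: w_def)
    show "col ?P j $ k = tensor_vec ?G w $ k"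
      unfolding t using k ij P_carrier G_dim k1 k2 j1 j2
      by (simp add: P_psi_def tensor_mat_def ket_bra_def j1_def[symmetric] j2_def[symmetric] ac_simps)
  qed
  have bw: "braket ?G w = 0"
  proof -
    have "braket ?G w = (\<Sum>k<2^n. (if k = j2 then cnj (?G $ j1) * cnj (?G $ k) else 0) - cnj (?G $ j1) * cnj (?G $ j2) * (cnj (?G $ k) * ?G $ k))"
      unfolding braket_def using G_dim w by (intro sum.cong) (auto simp: w_def algebra_simps)
    also have "\<dots> = cnj (?G $ j1) * cnj (?G $ j2) - cnj (?G $ j1) * cnj (?G $ j2) * braket ?G ?G"
      unfolding sum_subtractf sum_distrib_left[symmetric] using j2 G_dim by (simp add: braket_def)
    also have "\<dots> = 0" by (simp add: braket_GG)
    finally show ?thesis .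
  qed
  have "(Omega_g n E * ?P) $$ (i,j) = (Omega_g n E *\<^sub>v col ?P j) $ i"
    using ij Om_carrier P_carrier by simp
  also have "\<dots> = 0" unfolding col Om_Gw[OF w] bw using ij tensor_dim[OF G_dim G_dim] by simp
  finally show "(Omega_g n E * ?P) $$ (i,j) = 0\<^sub>m (2^n*2^n) (2^n*2^n) $$ (i,j)" using ij by simp
qed (use Om_carrier P_carrier in auto)

lemma OmF: "Omega_g n E * swap_op (2^n) = swap_op (2^n) * Omega_g n E"
proof -
  let ?F = "swap_op (2^n)" and ?O = "Omega_g n E" and ?D = "2^n*2^n"
  note c = F_carrier Om_carrier
  have "?F * ?O = ?F * ((?F * ?O) * ?F)" using FOmF by simp
  also have "\<dots> = (?F * (?F * ?O)) * ?F" using c by (simp add: assoc_mult_mat[of _ ?D ?D _ ?D _ ?D])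
  also have "?F * (?F * ?O) = (?F * ?F) * ?O" using c by (simp add: assoc_mult_mat[of _ ?D ?D _ ?D _ ?D])
  also have "\<dots> = ?O" using FF Om_carrier by simp
  finally show ?thesis by simp
qed

lemma Om_Ps_P: "Omega_g n E * P_sym (2^n) * P_psi (graph_state n E) = 0\<^sub>m (2^n*2^n) (2^n*2^n)"
proof -
  let ?F = "swap_op (2^n)" and ?O = "Omega_g n E" and ?D = "2^n*2^n" and ?P = "P_psi (graph_state n E)"
  note c = F_carrier Om_carrier P_carrier
  have s: "?F + 1\<^sub>m ?D \<in> carrier_mat ?D ?D" using F_carrier by simp
  have "?O * P_sym (2^n) = (1/2) \<cdot>\<^sub>m (?O * (?F + 1\<^sub>m ?D))" unfolding P_sym_def by (rule mult_smult_distrib[OF Om_carrier s])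
  also have "?O * (?F + 1\<^sub>m ?D) = ?O * ?F + ?O * 1\<^sub>m ?D" by (rule mult_add_distrib_mat[OF Om_carrier F_carrier one_carrier_mat])
  also have "?O * 1\<^sub>m ?D = ?O" using Om_carrier by simp
  finally have ps: "?O * P_sym (2^n) = (1/2) \<cdot>\<^sub>m (?O * ?F + ?O)" .
  have cOF: "?O * ?F + ?O \<in> carrier_mat ?D ?D" using c by simp
  have "?O * P_sym (2^n) * ?P = (1/2) \<cdot>\<^sub>m ((?O * ?F + ?O) * ?P)"
    unfolding ps by (rule mult_smult_assoc_mat[OF cOF P_carrier])
  also have "(?O * ?F + ?O) * ?P = ?O * ?F * ?P + ?O * ?P"
    by (rule add_mult_distrib_mat[OF mult_carrier_mat[OF Om_carrier F_carrier] Om_carrier P_carrier])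
  also have "?O * ?F * ?P = ?F * (?O * ?P)"
    unfolding OmF using c by (simp add: assoc_mult_mat[of _ ?D ?D _ ?D _ ?D])
  finally show ?thesis unfolding Om_P using c by simp
qed

end


lemma zero_chain1: assumes "X \<in> carrier_mat D D" "Om \<in> carrier_mat D D" "Y \<in> carrier_mat D D" "Om * Y = 0\<^sub>m D D"
  shows "X * Om * Y = (0\<^sub>m D D :: complex mat)"
  using assms by (simp add: assoc_mult_mat[of X D D Om D Y D])

lemma zero_chain2: assumes "X \<in> carrier_mat D D" "Om \<in> carrier_mat D D" "Y \<in> carrier_mat D D" "Z \<in> carrier_mat D D"
  "Om * Y * Z = 0\<^sub>m D D"
  shows "X * Om * Y * Z = (0\<^sub>m D D :: complex mat)"
proof -
  have "X * Om * Y = X * (Om * Y)" using assms by (simp add: assoc_mult_mat[of X D D Om D Y D])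
  then have "X * Om * Y * Z = X * (Om * Y * Z)" using assms by (simp add: assoc_mult_mat[of X D D "Om * Y" D Z D])
  then show ?thesis using assms by simp
qed

theorem mainTheorem6:
  fixes n :: nat and E :: "nat set set"
  assumes "simple_graph n E"
  defines "G \<equiv> graph_state n E" and "\<Omega> \<equiv> Omega_g n E"
      and "F \<equiv> swap_op (2 ^ n)" and "D \<equiv> 2 ^ n * 2 ^ n"
  shows
    \<comment> \<open>(i)\<close>
    "(\<Omega> \<in> carrier_mat D D \<and> \<Omega> * \<Omega> = \<Omega> \<and> mat_adjoint \<Omega> = \<Omega> \<and> F * \<Omega> * F = \<Omega>)
     \<comment> \<open>(ii)\<close>
     \<and> (\<forall>\<omega> \<in> carrier_vec (2 ^ n). braket \<omega> \<omega> = 1 \<longrightarrow>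
          \<Omega> *\<^sub>v tensor_vec G \<omega> = braket G \<omega> \<cdot>\<^sub>v tensor_vec G G \<and>
          \<Omega> *\<^sub>v tensor_vec \<omega> G = braket G \<omega> \<cdot>\<^sub>v tensor_vec G G)
     \<and> \<Omega> *\<^sub>v tensor_vec G G = tensor_vec G G
     \<comment> \<open>(iii)\<close>
     \<and> sym_two_copy_strategy G \<Omega>
     \<and> \<Omega> * P_psi G = 0\<^sub>m D D
     \<and> \<Omega> * P_sym (2 ^ n) * P_psi G = 0\<^sub>m D D
     \<and> lambda_star G \<Omega> = 0 \<and> gamma_star G \<Omega> = 0 \<and> xi_star G \<Omega> = 0"
proof -
  interpret gs n E by unfold_locales (rule assms(1))
  have Gd: "dim_vec G = 2^n" unfolding G_def using G_dim by simp
  have Oc: "\<Omega> \<in> carrier_mat D D" unfolding \<Omega>_def D_def by (rule Om_carrier)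
  have Fc: "F \<in> carrier_mat D D" unfolding F_def D_def by (rule F_carrier)
  have Pc: "P_psi G \<in> carrier_mat D D" unfolding G_def D_def by (rule P_carrier)
  have Psc: "P_sym (2^n) \<in> carrier_mat D D" unfolding P_sym_def D_def by simp
  have Mc: "(1 / 2 :: complex) \<cdot>\<^sub>m F + 1\<^sub>m D \<in> carrier_mat D D" using Fc by simp
  have Dpos: "D > 0" unfolding D_def by simp
  have idem: "\<Omega> * \<Omega> = \<Omega>" unfolding \<Omega>_def by (rule Om_idem)
  have herm: "\<And>i j. i < D \<Longrightarrow> j < D \<Longrightarrow> cnj (\<Omega> $$ (j,i)) = \<Omega> $$ (i,j)"
    unfolding \<Omega>_def D_def by (rule Om_herm)
  have adj: "mat_adjoint \<Omega> = \<Omega>" by (rule herm_adjoint[OF Oc herm])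
  have FOF: "F * \<Omega> * F = \<Omega>" unfolding F_def \<Omega>_def by (rule FOmF)
  have ii: "\<forall>\<omega> \<in> carrier_vec (2 ^ n). braket \<omega> \<omega> = 1 \<longrightarrow>
          \<Omega> *\<^sub>v tensor_vec G \<omega> = braket G \<omega> \<cdot>\<^sub>v tensor_vec G G \<and>
          \<Omega> *\<^sub>v tensor_vec \<omega> G = braket G \<omega> \<cdot>\<^sub>v tensor_vec G G"
    unfolding \<Omega>_def G_def using Om_Gw Om_wG by blast
  have GG: "\<Omega> *\<^sub>v tensor_vec G G = tensor_vec G G"
    using Om_Gw[OF G_dim] braket_GG unfolding \<Omega>_def G_def by simp
  have psd1: "psd D \<Omega>" by (rule psd_proj[OF Oc idem herm])
  have psd2: "psd D (1\<^sub>m D - \<Omega>)"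
  proof -
    have cc: "1\<^sub>m D - \<Omega> \<in> carrier_mat D D" using Oc by auto
    have ch: "\<And>i j. i < D \<Longrightarrow> j < D \<Longrightarrow> cnj ((1\<^sub>m D - \<Omega>) $$ (j,i)) = (1\<^sub>m D - \<Omega>) $$ (i,j)"
      using compl_herm[OF herm Oc] by blast
    show ?thesis by (rule psd_proj[OF cc compl_idem[OF Oc idem] ch])
  qed
  have strat: "sym_two_copy_strategy G \<Omega>"
    unfolding sym_two_copy_strategy_def Let_def Gd
    using psd1 psd2 GG FOF unfolding D_def F_def by simp
  have OP: "\<Omega> * P_psi G = 0\<^sub>m D D" unfolding \<Omega>_def G_def D_def by (rule Om_P)
  have OPP: "\<Omega> * P_sym (2 ^ n) * P_psi G = 0\<^sub>m D D" unfolding \<Omega>_def G_def D_def by (rule Om_Ps_P)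
  have l: "lambda_star G \<Omega> = 0"
  proof -
    have "P_psi G * P_sym (2^n) * \<Omega> * P_sym (2^n) * P_psi G = 0\<^sub>m D D"
      by (rule zero_chain2[OF mult_carrier_mat[OF Pc Psc] Oc Psc Pc OPP])
    then show ?thesis unfolding lambda_star_def Let_def Gd using zero_eig[OF Dpos] by simp
  qed
  have g: "gamma_star G \<Omega> = 0"
  proof -
    have "P_psi G * F * \<Omega> * P_psi G = 0\<^sub>m D D"
      by (rule zero_chain1[OF mult_carrier_mat[OF Pc Fc] Oc Pc OP])
    then show ?thesis unfolding gamma_star_def Let_def Gd F_def using zero_eig[OF Dpos] by simp
  qed
  have x: "xi_star G \<Omega> = 0"
  proof -
    have "P_psi G * ((1 / 2 :: complex) \<cdot>\<^sub>m F + 1\<^sub>m D) * \<Omega> * P_psi G = 0\<^sub>m D D"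
      by (rule zero_chain1[OF mult_carrier_mat[OF Pc Mc] Oc Pc OP])
    then show ?thesis unfolding xi_star_def Let_def Gd F_def D_def using zero_eig[OF Dpos[unfolded D_def]] by simp
  qed
  show ?thesis using Oc idem adj FOF ii GG strat OP OPP l g x by blast
qed



end
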